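(* Let $\varphi$ be a Musielak–Orlicz function of uniformly lower type $p_\varphi^-$ for some $p_\varphi^-\in[1,\infty)$. If the Doob maximal operator $M$ is bounded on $L^{\varphi^*}(\Omega)$, then there is $C>0$ such that for every sequence $(g_k)_{k\in\mathbb N}$ of nonnegative $\mathcal F$-measurable functions (not necessarily adapted), $$\Big\|\sum_{k\in\mathbb N}\mathbb E_k(g_k)\Big\|_{L^\varphi(\Omega)}\le C\Big\|\sum_{k\in\mathbb N}g_k\Big\|_{L^\varphi(\Omega)}.$$
   Context: Let $(\Omega,\mathcal F,\mathbb P)$ be a probability space, $(\mathcal F_n)_{n\in\mathbb Z_+}$ a nondecreasing sequence of sub-$\sigma$-algebras of $\mathcal F$, $\mathbb E_n$ the conditional expectation w.r.t. $\mathcal F_n$, and $M(f):=\sup_{n\in\mathbb Z_+}|\mathbb E_n f|$. A Musielak–Orlicz function is $\varphi:\Omega\times[0,\infty)\to[0,\infty)$ with $\varphi(x,\cdot)$ nondecreasing, $\varphi(x,0)=0$, $\lim_{t\to\infty}\varphi(x,t)=\infty$ for each $x$, and $\varphi(\cdot,t)$ measurable for each $t$. For a function $\psi$ of this kind, $\|f\|_{L^\psi(\Omega)}:=\inf\{\lambda>0:\int_\Omega\psi(x,|f(x)|/\lambda)\,d\mathbb P\le1\}$. Uniformly lower type $p$: there is $C$ with $\varphi(x,st)\le Cs^p\varphi(x,t)$ for all $x$, $t\ge0$, $s\in(0,1)$. The complementary function is $\varphi^*(x,t):=\sup_{u>0}[ut-\varphi(x,u)]$. *)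

theory Defs
  imports "HOL-Probability.Probability"
begin

text \<open>Musielak--Orlicz function on the probability space M (only t \<ge> 0 matters).\<close>
definition musielak_orlicz :: "'a measure \<Rightarrow> ('a \<Rightarrow> real \<Rightarrow> real) \<Rightarrow> bool" where
  "musielak_orlicz M \<phi> \<longleftrightarrow>
     (\<forall>x\<in>space M. (\<forall>t\<ge>0. \<phi> x t \<ge> 0) \<and> mono_on {0..} (\<phi> x) \<and> \<phi> x 0 = 0
        \<and> filterlim (\<phi> x) at_top at_top) \<and>
     (\<forall>t\<ge>0. (\<lambda>x. \<phi> x t) \<in> borel_measurable M)"

definition uniformly_lower_type :: "'a measure \<Rightarrow> ('a \<Rightarrow> real \<Rightarrow> real) \<Rightarrow> real \<Rightarrow> bool" where
  "uniformly_lower_type M \<phi> p \<longleftrightarrow>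
     (\<exists>C. \<forall>x\<in>space M. \<forall>t\<ge>0. \<forall>s. 0 < s \<and> s < 1 \<longrightarrow> \<phi> x (s * t) \<le> C * s powr p * \<phi> x t)"

definition compl_fun :: "('a \<Rightarrow> real \<Rightarrow> real) \<Rightarrow> 'a \<Rightarrow> real \<Rightarrow> ennreal" where
  "compl_fun \<phi> x t = e2ennreal (SUP u\<in>{0<..}. ereal (u * t - \<phi> x u))"

text \<open>Luxemburg (quasi-)norm of a [0,\<infinity>]-valued function f w.r.t. \<psi>, with \<psi>(x,\<infinity>) = \<infinity>;
  the infimum of the empty set is \<infinity>. Apply to |f| for real f.\<close>
definition lux_norm :: "'a measure \<Rightarrow> ('a \<Rightarrow> real \<Rightarrow> ennreal) \<Rightarrow> ('a \<Rightarrow> ennreal) \<Rightarrow> ennreal" where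
  "lux_norm M \<psi> f = Inf {ennreal c | c. c > 0 \<and>
     (\<integral>\<^sup>+ x. (if f x = \<infinity> then \<infinity> else \<psi> x (enn2real (f x) / c)) \<partial>M) \<le> 1}"

definition doob_max :: "'a measure \<Rightarrow> (nat \<Rightarrow> 'a measure) \<Rightarrow> ('a \<Rightarrow> real) \<Rightarrow> 'a \<Rightarrow> ennreal" where
  "doob_max M F f x = (SUP n. ennreal \<bar>real_cond_exp M (F n) f x\<bar>)"

end

theory Submission
  imports Defs
begin



definition modu :: "'a measure \<Rightarrow> ('a \<Rightarrow> real \<Rightarrow> ennreal) \<Rightarrow> ('a \<Rightarrow> ennreal) \<Rightarrow> real \<Rightarrow> ennreal" where
  "modu M \<psi> f c = (\<integral>\<^sup>+ x. (if f x = \<infinity> then \<infinity> else \<psi> x (enn2real (f x) / c)) \<partial>M)"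

lemma lux_le:
  assumes "c > 0" "modu M \<psi> f c \<le> 1"
  shows "lux_norm M \<psi> f \<le> ennreal c"
  unfolding lux_norm_def using assms unfolding modu_def by (intro Inf_lower) auto

lemma modu_mono_c:
  assumes mono: "\<And>x s t. x \<in> space M \<Longrightarrow> 0 \<le> s \<Longrightarrow> s \<le> t \<Longrightarrow> \<psi> x s \<le> \<psi> x t"
    and "0 < c" "c \<le> c'"
  shows "modu M \<psi> f c' \<le> modu M \<psi> f c"
  unfolding modu_def
proof (rule nn_integral_mono)
  fix x assume x: "x \<in> space M"
  have "enn2real (f x) / c' \<le> enn2real (f x) / c"
    using assms by (simp add: divide_left_mono)
  moreover have "0 \<le> enn2real (f x) / c'" using assms by simp
  ultimately show "(if f x = \<infinity> then \<infinity> else \<psi> x (enn2real (f x) / c')) \<le> (if f x = \<infinity> then \<infinity> else \<psi> x (enn2real (f x) / c))"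
    using mono[OF x] by auto
qed

lemma lux_lt:
  assumes mono: "\<And>x s t. x \<in> space M \<Longrightarrow> 0 \<le> s \<Longrightarrow> s \<le> t \<Longrightarrow> \<psi> x s \<le> \<psi> x t"
    and "lux_norm M \<psi> f < ennreal c"
  shows "modu M \<psi> f c \<le> 1"
proof -
  from assms(2) obtain e where e: "e \<in> {ennreal c |c. c > 0 \<and> modu M \<psi> f c \<le> 1}" "e < ennreal c"
    unfolding lux_norm_def modu_def[symmetric] by (auto simp: Inf_less_iff)
  then obtain c0 where c0: "c0 > 0" "modu M \<psi> f c0 \<le> 1" "e = ennreal c0" by auto
  with e have "c0 < c" by (simp add: ennreal_less_iff)
  then have "modu M \<psi> f c \<le> modu M \<psi> f c0" using c0 by (intro modu_mono_c[OF mono]) auto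
  with c0 show ?thesis by simp
qed

lemma lux_gt:
  assumes "ennreal c < lux_norm M \<psi> f" "c > 0"
  shows "modu M \<psi> f c > 1"
  using lux_le[of c M \<psi> f] assms by force




lemma mo_facts:
  assumes "musielak_orlicz M \<phi>"
  shows mo_nonneg: "\<And>x t. x \<in> space M \<Longrightarrow> 0 \<le> t \<Longrightarrow> 0 \<le> \<phi> x t"
    and mo_mono: "\<And>x s t. x \<in> space M \<Longrightarrow> 0 \<le> s \<Longrightarrow> s \<le> t \<Longrightarrow> \<phi> x s \<le> \<phi> x t"
    and mo_zero: "\<And>x. x \<in> space M \<Longrightarrow> \<phi> x 0 = 0"
    and mo_lim: "\<And>x. x \<in> space M \<Longrightarrow> filterlim (\<phi> x) at_top at_top"
    and mo_meas: "\<And>t. 0 \<le> t \<Longrightarrow> (\<lambda>x. \<phi> x t) \<in> borel_measurable M"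
  using assms unfolding musielak_orlicz_def mono_on_def by auto

definition sw :: "('a \<Rightarrow> real \<Rightarrow> real) \<Rightarrow> ('a \<Rightarrow> ennreal) \<Rightarrow> real \<Rightarrow> 'a \<Rightarrow> ennreal" where
  "sw \<phi> f b x = (if f x = \<infinity> then \<infinity> else
     (INF q::rat. if enn2real (f x) / b \<le> real_of_rat q then ennreal (\<phi> x (max 0 (real_of_rat q))) else \<infinity>))"

lemma sw_meas:
  assumes "musielak_orlicz M \<phi>" and [measurable]: "f \<in> borel_measurable M"
  shows "sw \<phi> f b \<in> borel_measurable M"
proof -
  have [measurable]: "\<And>q::rat. (\<lambda>x. \<phi> x (max 0 (real_of_rat q))) \<in> borel_measurable M"
    using mo_meas[OF assms(1)] by simp
  have "(\<lambda>x. INF q::rat. if enn2real (f x) / b \<le> real_of_rat q then ennreal (\<phi> x (max 0 (real_of_rat q))) else \<infinity>) \<in> borel_measurable M"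
    by (rule borel_measurable_INF) auto
  then show ?thesis unfolding sw_def by measurable
qed

lemma sw_lo:
  assumes "musielak_orlicz M \<phi>" "x \<in> space M" "b > 0"
  shows "(if f x = \<infinity> then \<infinity> else ennreal (\<phi> x (enn2real (f x) / b))) \<le> sw \<phi> f b x"
proof (cases "f x = \<infinity>")
  case False
  have "ennreal (\<phi> x (enn2real (f x) / b)) \<le> (if enn2real (f x) / b \<le> real_of_rat q then ennreal (\<phi> x (max 0 (real_of_rat q))) else \<infinity>)" for q
  proof (cases "enn2real (f x) / b \<le> real_of_rat q")
    case True
    have "0 \<le> enn2real (f x) / b" using assms by simp
    with True have "\<phi> x (enn2real (f x) / b) \<le> \<phi> x (max 0 (real_of_rat q))"
      by (intro mo_mono[OF assms(1,2)]) auto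
    with True show ?thesis by (simp add: ennreal_leI)
  qed simp
  then have "ennreal (\<phi> x (enn2real (f x) / b)) \<le> (INF q::rat. if enn2real (f x) / b \<le> real_of_rat q then ennreal (\<phi> x (max 0 (real_of_rat q))) else \<infinity>)"
    by (rule INF_greatest)
  then show ?thesis using False unfolding sw_def by (simp only: if_False)
qed (simp add: sw_def)

lemma sw_hi:
  assumes "musielak_orlicz M \<phi>" "x \<in> space M" "0 < a" "a < b"
  shows "sw \<phi> f b x \<le> (if f x = \<infinity> then \<infinity> else ennreal (\<phi> x (enn2real (f x) / a)))"
proof (cases "f x = \<infinity>")
  case False
  define t where "t = enn2real (f x)"
  have t0: "0 \<le> t" unfolding t_def by simp
  obtain r where r: "r \<in> \<rat>" "t / b \<le> r" "r \<le> t / a"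
  proof (cases "t = 0")
    case True then show ?thesis using that[of 0] by auto
  next
    case False
    then have "t / b < t / a" using t0 assms by (simp add: divide_strict_left_mono)
    then obtain r where "r \<in> \<rat>" "t / b < r" "r < t / a" using Rats_dense_in_real by blast
    then show ?thesis using that[of r] by auto
  qed
  then obtain q where q: "r = real_of_rat q" by (auto elim: Rats_cases)
  have r0: "0 \<le> r" using r(2) t0 assms by (meson order.trans divide_nonneg_pos less_trans)
  have "(INF q::rat. if enn2real (f x) / b \<le> real_of_rat q then ennreal (\<phi> x (max 0 (real_of_rat q))) else \<infinity>)
     \<le> (if enn2real (f x) / b \<le> real_of_rat q then ennreal (\<phi> x (max 0 (real_of_rat q))) else \<infinity>)"
    by (rule INF_lower) simp
  then have "sw \<phi> f b x \<le> ennreal (\<phi> x (max 0 (real_of_rat q)))"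
    unfolding sw_def using False r q t_def by (simp only: if_False if_True)
  also have "\<dots> \<le> ennreal (\<phi> x (t / a))"
    using r r0 q by (intro ennreal_leI mo_mono[OF assms(1,2)]) auto
  finally show ?thesis using False t_def by simp
qed (simp add: sw_def)

lemma sw_mono:
  assumes "f x \<le> g x" "g x \<noteq> \<infinity>" "b > 0"
  shows "sw \<phi> f b x \<le> sw \<phi> g b x"
proof -
  have "f x \<noteq> \<infinity>" using assms by (auto simp: top_unique)
  moreover have "enn2real (f x) \<le> enn2real (g x)" using assms by (intro enn2real_mono) (auto simp: top.not_eq_extremum)
  then have "enn2real (f x) / b \<le> enn2real (g x) / b" using assms by (simp add: divide_right_mono)
  then have "(INF q::rat. if enn2real (f x) / b \<le> real_of_rat q then ennreal (\<phi> x (max 0 (real_of_rat q))) else \<infinity>)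
     \<le> (INF q::rat. if enn2real (g x) / b \<le> real_of_rat q then ennreal (\<phi> x (max 0 (real_of_rat q))) else \<infinity>)"
    by (intro INF_mono') auto
  with \<open>f x \<noteq> \<infinity>\<close> show ?thesis using assms unfolding sw_def by (simp only: if_False)
qed




lemma lower_type_C:
  assumes "uniformly_lower_type M \<phi> p" "p \<ge> 1" "musielak_orlicz M \<phi>"
  obtains C' where "C' \<ge> 1" "\<And>x (t::real) s. x \<in> space M \<Longrightarrow> 0 \<le> t \<Longrightarrow> 0 < s \<Longrightarrow> s < 1 \<Longrightarrow> \<phi> x (s * t) \<le> C' * s * \<phi> x t"
proof -
  obtain C where C: "\<forall>x\<in>space M. \<forall>t\<ge>0. \<forall>s. 0 < s \<and> s < 1 \<longrightarrow> \<phi> x (s * t) \<le> C * s powr p * \<phi> x t"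
    using assms(1) unfolding uniformly_lower_type_def by blast
  show ?thesis
  proof (rule that[of "max C 1"])
    fix x and t :: real and s :: real assume x: "x \<in> space M" and t: "0 \<le> t" and s: "0 < s" "s < 1"
    have ph: "0 \<le> \<phi> x t" using mo_nonneg[OF assms(3) x t] .
    have sp: "s powr p \<le> s" using powr_mono'[of 1 p s] s assms(2) by simp
    have "\<phi> x (s * t) \<le> C * s powr p * \<phi> x t" using C x t s by auto
    also have "\<dots> \<le> max C 1 * s powr p * \<phi> x t"
      using ph by (intro mult_right_mono) (auto intro: mult_right_mono)
    also have "\<dots> \<le> max C 1 * s * \<phi> x t"
      using ph sp by (intro mult_right_mono mult_left_mono) auto
    finally show "\<phi> x (s * t) \<le> max C 1 * s * \<phi> x t" .
  qed simp
qed

lemma compl_le: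
  assumes "\<And>u. u > 0 \<Longrightarrow> u * a - \<phi> x u \<le> B"
  shows "compl_fun \<phi> x a \<le> ennreal B"
proof -
  have "(SUP u\<in>{0<..}. ereal (u * a - \<phi> x u)) \<le> ereal B"
    using assms by (intro SUP_least) auto
  then have "e2ennreal (SUP u\<in>{0<..}. ereal (u * a - \<phi> x u)) \<le> e2ennreal (ereal B)"
    by (rule e2ennreal_mono)
  then show ?thesis unfolding compl_fun_def by (simp add: e2ennreal_ereal)
qed

lemma compl_ge:
  assumes "u > 0"
  shows "ennreal (u * a - \<phi> x u) \<le> compl_fun \<phi> x a"
proof -
  have "ereal (u * a - \<phi> x u) \<le> (SUP u\<in>{0<..}. ereal (u * a - \<phi> x u))"
    using assms by (intro SUP_upper) auto
  then have "e2ennreal (ereal (u * a - \<phi> x u)) \<le> e2ennreal (SUP u\<in>{0<..}. ereal (u * a - \<phi> x u))"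
    by (rule e2ennreal_mono)
  then show ?thesis unfolding compl_fun_def by (simp add: e2ennreal_ereal)
qed

lemma compl_mono:
  assumes "0 \<le> s" "s \<le> t"
  shows "compl_fun \<phi> x s \<le> compl_fun \<phi> x t"
proof -
  have "(SUP u\<in>{0<..}. ereal (u * s - \<phi> x u)) \<le> (SUP u\<in>{0<..}. ereal (u * t - \<phi> x u))"
    using assms by (intro SUP_mono) (auto intro!: bexI mult_left_mono)
  then show ?thesis unfolding compl_fun_def by (rule e2ennreal_mono)
qed

lemma young:
  assumes "musielak_orlicz M \<phi>" "x \<in> space M" "0 \<le> u" "0 \<le> v"
  shows "ennreal (u * v) \<le> ennreal (\<phi> x u) + compl_fun \<phi> x v"
proof (cases "u = 0")
  case True then show ?thesis by simp
next
  case False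
  then have "u > 0" using assms by simp
  have ph: "0 \<le> \<phi> x u" using mo_nonneg[OF assms(1,2,3)] .
  have "ennreal (u * v) \<le> ennreal (\<phi> x u) + ennreal (u * v - \<phi> x u)"
  proof (cases "u * v - \<phi> x u \<ge> 0")
    case True then show ?thesis using ph by (simp add: ennreal_plus[symmetric] del: ennreal_plus)
  next
    case False
    then have "ennreal (u * v) \<le> ennreal (\<phi> x u)" by (intro ennreal_leI) simp
    then show ?thesis by (simp add: add_increasing2)
  qed
  also have "\<dots> \<le> ennreal (\<phi> x u) + compl_fun \<phi> x v"
    using compl_ge[OF \<open>u > 0\<close>] by (intro add_left_mono)
  finally show ?thesis .
qed

lemma nn_integral_subadd:
  assumes [measurable]: "f \<in> borel_measurable M" "m \<in> borel_measurable M"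
    and le: "\<And>x. x \<in> space M \<Longrightarrow> f x \<le> m x + g x"
  shows "(\<integral>\<^sup>+ x. f x \<partial>M) \<le> (\<integral>\<^sup>+ x. m x \<partial>M) + (\<integral>\<^sup>+ x. g x \<partial>M)"
proof -
  have "(\<integral>\<^sup>+ x. f x \<partial>M) \<le> (\<integral>\<^sup>+ x. m x + (if m x = \<infinity> then 0 else f x - m x) \<partial>M)"
  proof (rule nn_integral_mono)
    fix x show "f x \<le> m x + (if m x = \<infinity> then 0 else f x - m x)"
      by (cases "m x = \<infinity>") (auto, metis add_diff_inverse_ennreal add_increasing2 linorder_le_cases zero_le)
  qed
  also have "\<dots> = (\<integral>\<^sup>+ x. m x \<partial>M) + (\<integral>\<^sup>+ x. (if m x = \<infinity> then 0 else f x - m x) \<partial>M)"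
    by (rule nn_integral_add) auto
  also have "\<dots> \<le> (\<integral>\<^sup>+ x. m x \<partial>M) + (\<integral>\<^sup>+ x. g x \<partial>M)"
  proof (intro add_left_mono nn_integral_mono)
    fix x assume "x \<in> space M"
    then have "f x \<le> m x + g x" by (rule le)
    then show "(if m x = \<infinity> then 0 else f x - m x) \<le> g x"
      by (auto simp: ennreal_minus_le_iff)
  qed
  finally show ?thesis .
qed




lemma holder:
  assumes mo: "musielak_orlicz M \<phi>" and [measurable]: "G \<in> borel_measurable M" "Q \<in> borel_measurable M"
    and ab: "\<alpha> > 0" "\<beta> > 0"
    and mG: "modu M (\<lambda>x t. ennreal (\<phi> x t)) G \<alpha> \<le> 1"
    and mQ: "modu M (compl_fun \<phi>) Q \<beta> \<le> 1"
  shows "(\<integral>\<^sup>+ x. G x * Q x \<partial>M) \<le> ennreal (4 * \<alpha> * \<beta>)"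
proof -
  define m1 where "m1 = sw \<phi> G (2 * \<alpha>)"
  have [measurable]: "m1 \<in> borel_measurable M" unfolding m1_def by (rule sw_meas[OF mo]) simp
  define Psi where "Psi x = (if Q x = \<infinity> then \<infinity> else compl_fun \<phi> x (enn2real (Q x) / \<beta>))" for x
  define c where "c = 1 / (2 * \<alpha> * \<beta>)"
  have c0: "c > 0" unfolding c_def using ab by simp
  have "(\<integral>\<^sup>+ x. m1 x \<partial>M) \<le> modu M (\<lambda>x t. ennreal (\<phi> x t)) G \<alpha>"
    unfolding modu_def m1_def using ab by (intro nn_integral_mono sw_hi[OF mo]) auto
  with mG have i1: "(\<integral>\<^sup>+ x. m1 x \<partial>M) \<le> 1" by simp
  have i2: "(\<integral>\<^sup>+ x. Psi x \<partial>M) \<le> 1" using mQ unfolding modu_def Psi_def by simp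
  have pw: "G x * Q x * ennreal c \<le> m1 x + Psi x" if x: "x \<in> space M" for x
  proof (cases "G x = \<infinity> \<or> Q x = \<infinity>")
    case True then show ?thesis unfolding m1_def Psi_def sw_def by auto
  next
    case False
    then obtain g q where gq: "G x = ennreal g" "Q x = ennreal q" "0 \<le> g" "0 \<le> q"
      by (cases "G x"; cases "Q x") auto
    have "G x * Q x * ennreal c = ennreal (g * q * c)" using gq c0 by (simp add: ennreal_mult)
    also have "g * q * c = (g / (2 * \<alpha>)) * (q / \<beta>)" unfolding c_def by simp
    finally have "G x * Q x * ennreal c = ennreal ((g / (2 * \<alpha>)) * (q / \<beta>))" .
    also have "\<dots> \<le> ennreal (\<phi> x (g / (2 * \<alpha>))) + compl_fun \<phi> x (q / \<beta>)"
      using gq ab by (intro young[OF mo x]) auto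
    also have "\<dots> \<le> m1 x + Psi x"
    proof (rule add_mono)
      show "ennreal (\<phi> x (g / (2 * \<alpha>))) \<le> m1 x"
        using sw_lo[OF mo x, of "2 * \<alpha>" G] gq ab unfolding m1_def by simp
      show "compl_fun \<phi> x (q / \<beta>) \<le> Psi x" unfolding Psi_def using gq by simp
    qed
    finally show ?thesis .
  qed
  have "(\<integral>\<^sup>+ x. G x * Q x * ennreal c \<partial>M) \<le> (\<integral>\<^sup>+ x. m1 x \<partial>M) + (\<integral>\<^sup>+ x. Psi x \<partial>M)"
    by (rule nn_integral_subadd) (auto intro: pw)
  also have "\<dots> \<le> 2" using add_mono[OF i1 i2] by simp
  finally have *: "(\<integral>\<^sup>+ x. G x * Q x \<partial>M) * ennreal c \<le> 2"
    by (simp add: nn_integral_multc)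
  have "(\<integral>\<^sup>+ x. G x * Q x \<partial>M) = (\<integral>\<^sup>+ x. G x * Q x \<partial>M) * ennreal c * ennreal (2 * \<alpha> * \<beta>)"
  proof -
    have "ennreal c * ennreal (2 * \<alpha> * \<beta>) = ennreal (c * (2 * \<alpha> * \<beta>))" using ab c0 by (simp add: ennreal_mult)
    also have "c * (2 * \<alpha> * \<beta>) = 1" unfolding c_def using ab by simp
    finally show ?thesis by (simp add: mult.assoc)
  qed
  also have "\<dots> \<le> 2 * ennreal (2 * \<alpha> * \<beta>)" by (intro mult_right_mono *) simp
  also have "\<dots> = ennreal (4 * \<alpha> * \<beta>)" 
  proof -
    have "ennreal (4 * \<alpha> * \<beta>) = ennreal (2 * (2 * \<alpha> * \<beta>))" by (simp add: mult.assoc)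
    also have "\<dots> = ennreal 2 * ennreal (2 * \<alpha> * \<beta>)" using ab by (intro ennreal_mult) auto
    finally show ?thesis by simp
  qed
  finally show ?thesis .
qed




lemma mart_one:
  assumes "prob_space M" "subalgebra M Fk"
    and [measurable]: "gk \<in> borel_measurable M" "h \<in> borel_measurable M"
    and hb: "\<And>x. x \<in> space M \<Longrightarrow> 0 \<le> h x \<and> h x \<le> b"
    and D[measurable]: "D \<in> borel_measurable M"
    and DD: "\<And>x. x \<in> space M \<Longrightarrow> ennreal \<bar>real_cond_exp M Fk h x\<bar> \<le> D x"
  shows "(\<integral>\<^sup>+ x. nn_cond_exp M Fk (\<lambda>y. ennreal (gk y)) x * ennreal (h x) \<partial>M)
      \<le> (\<integral>\<^sup>+ x. ennreal (gk x) * D x \<partial>M)"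
proof -
  have "finite_measure M" using assms(1) by (simp add: prob_space_def)
  then have "finite_measure_subalgebra M Fk" using assms(2)
    by (simp add: finite_measure_subalgebra_def finite_measure_subalgebra_axioms_def)
  then interpret sigma_finite_subalgebra M Fk by (rule finite_measure_subalgebra_is_sigma_finite)
  define Eg where "Eg = nn_cond_exp M Fk (\<lambda>y. ennreal (gk y))"
  define Eh where "Eh = nn_cond_exp M Fk (\<lambda>y. ennreal (h y))"
  have [measurable]: "Eg \<in> borel_measurable Fk" "Eh \<in> borel_measurable Fk"
    "Eg \<in> borel_measurable M" "Eh \<in> borel_measurable M" unfolding Eg_def Eh_def by auto
  have "(\<integral>\<^sup>+ x. Eg x * ennreal (h x) \<partial>M) = (\<integral>\<^sup>+ x. Eg x * Eh x \<partial>M)"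
    unfolding Eh_def by (rule nn_cond_exp_intg[symmetric]) auto
  also have "\<dots> = (\<integral>\<^sup>+ x. Eh x * Eg x \<partial>M)" by (simp add: mult.commute)
  also have "\<dots> = (\<integral>\<^sup>+ x. Eh x * ennreal (gk x) \<partial>M)"
    unfolding Eg_def by (rule nn_cond_exp_intg) auto
  also have "\<dots> \<le> (\<integral>\<^sup>+ x. ennreal (gk x) * D x \<partial>M)"
  proof (rule nn_integral_mono_AE)
    have "AE x in M. (\<lambda>y. ennreal (b::real)) x = nn_cond_exp M Fk (\<lambda>y. ennreal b) x"
      by (rule nn_cond_exp_F_meas) simp
    moreover have "AE x in M. Eh x \<le> nn_cond_exp M Fk (\<lambda>y. ennreal b) x"
      unfolding Eh_def by (rule nn_cond_exp_mono) (auto intro!: AE_I2 ennreal_leI simp: hb)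
    moreover have "AE x in M. nn_cond_exp M Fk (\<lambda>x. ennreal (- h x)) x = nn_cond_exp M Fk (\<lambda>x. 0) x"
      by (rule nn_cond_exp_cong) (auto simp: hb ennreal_neg)
    moreover have "AE x in M. (\<lambda>x. 0::ennreal) x = nn_cond_exp M Fk (\<lambda>x. 0) x"
      by (rule nn_cond_exp_F_meas) simp
    moreover have "AE x in M. x \<in> space M" by (rule AE_I2)
    ultimately show "AE x in M. Eh x * ennreal (gk x) \<le> ennreal (gk x) * D x"
    proof (eventually_elim)
      case (elim x)
      then have fin: "Eh x \<le> ennreal b" by simp
      then have "Eh x \<noteq> \<infinity>" by (auto simp: top_unique)
      have "real_cond_exp M Fk h x = enn2real (Eh x)"
        using elim unfolding real_cond_exp_def Eh_def by simp
      then have "Eh x = ennreal \<bar>real_cond_exp M Fk h x\<bar>"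
        using \<open>Eh x \<noteq> \<infinity>\<close> by (simp add: ennreal_enn2real_if)
      also have "\<dots> \<le> D x" using DD elim by auto
      finally show ?case by (simp add: mult.commute mult_right_mono)
    qed
  qed
  finally show ?thesis unfolding Eg_def .
qed

lemma doob_meas[measurable]: "doob_max M F h \<in> borel_measurable M"
  unfolding doob_max_def by measurable

lemma mart:
  assumes "prob_space M" "\<And>n. subalgebra M (F n)"
    and [measurable]: "\<And>k. g k \<in> borel_measurable M" "h \<in> borel_measurable M"
    and hb: "\<And>x. x \<in> space M \<Longrightarrow> 0 \<le> h x \<and> h x \<le> b"
  shows "(\<integral>\<^sup>+ x. (\<Sum>k. nn_cond_exp M (F k) (\<lambda>y. ennreal (g k y)) x) * ennreal (h x) \<partial>M)
      \<le> (\<integral>\<^sup>+ x. (\<Sum>k. ennreal (g k x)) * doob_max M F h x \<partial>M)"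
proof -
  have "(\<integral>\<^sup>+ x. (\<Sum>k. nn_cond_exp M (F k) (\<lambda>y. ennreal (g k y)) x) * ennreal (h x) \<partial>M)
     = (\<integral>\<^sup>+ x. (\<Sum>k. nn_cond_exp M (F k) (\<lambda>y. ennreal (g k y)) x * ennreal (h x)) \<partial>M)"
    by simp
  also have "\<dots> = (\<Sum>k. \<integral>\<^sup>+ x. nn_cond_exp M (F k) (\<lambda>y. ennreal (g k y)) x * ennreal (h x) \<partial>M)"
    by (rule nn_integral_suminf) measurable
  also have "\<dots> \<le> (\<Sum>k. \<integral>\<^sup>+ x. ennreal (g k x) * doob_max M F h x \<partial>M)"
  proof (intro suminf_le summableI)
    fix k
    show "(\<integral>\<^sup>+ x. nn_cond_exp M (F k) (\<lambda>y. ennreal (g k y)) x * ennreal (h x) \<partial>M)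
       \<le> (\<integral>\<^sup>+ x. ennreal (g k x) * doob_max M F h x \<partial>M)"
      by (rule mart_one[OF assms(1,2), where b=b]) (auto simp: hb doob_max_def intro: SUP_upper)
  qed
  also have "\<dots> = (\<integral>\<^sup>+ x. (\<Sum>k. ennreal (g k x) * doob_max M F h x) \<partial>M)"
    by (rule nn_integral_suminf[symmetric]) measurable
  also have "\<dots> = (\<integral>\<^sup>+ x. (\<Sum>k. ennreal (g k x)) * doob_max M F h x \<partial>M)"
    by simp
  finally show ?thesis .
qed




lemma star_bound:
  assumes mo: "musielak_orlicz M \<phi>" and x: "x \<in> space M"
    and LT: "\<And>x (t::real) s. x \<in> space M \<Longrightarrow> 0 \<le> t \<Longrightarrow> 0 < s \<Longrightarrow> s < 1 \<Longrightarrow> \<phi> x (s * t) \<le> C' * s * \<phi> x t"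
    and C1: "C' \<ge> 1" and M1: "M0r \<ge> 1" and c: "c = 1 / (2 * C' * M0r)"
    and t: "t > 0" and w: "0 \<le> w" "w \<le> \<phi> x (2 * t)"
  shows "compl_fun \<phi> x (c * w / t) \<le> ennreal (2 * c * w)"
proof (rule compl_le)
  fix u :: real assume u: "u > 0"
  have c0: "c > 0" using c C1 M1 by simp
  show "u * (c * w / t) - \<phi> x u \<le> 2 * c * w"
  proof (cases "u \<le> 2 * t")
    case True
    have "u * (c * w / t) \<le> 2 * t * (c * w / t)"
      using True c0 w t by (intro mult_right_mono) auto
    also have "\<dots> = 2 * c * w" using t by simp
    finally show ?thesis using mo_nonneg[OF mo x, of u] u by simp
  next
    case False
    define s where "s = 2 * t / u"
    have s: "0 < s" "s < 1" using False t u unfolding s_def by auto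
    have "\<phi> x (2 * t) = \<phi> x (s * u)" unfolding s_def using u by simp
    also have "\<dots> \<le> C' * s * \<phi> x u" using LT[OF x _ s] u by simp
    finally have w2: "w \<le> C' * s * \<phi> x u" using w by simp
    have "u * (c * w / t) = (c * u / t) * w" by simp
    also have "\<dots> \<le> (c * u / t) * (C' * s * \<phi> x u)"
      using w2 c0 u t by (intro mult_left_mono) auto
    also have "\<dots> = 2 * c * C' * \<phi> x u" unfolding s_def using u t by (simp add: field_simps)
    also have "\<dots> = \<phi> x u / M0r" unfolding c using C1 M1 by (simp add: field_simps)
    also have "\<dots> \<le> \<phi> x u" using M1 mo_nonneg[OF mo x, of u] u mult_left_mono[of 1 M0r "\<phi> x u"] by (simp add: divide_le_eq)
    finally show ?thesis using c0 w by (simp add: algebra_simps) (smt (verit) mult_nonneg_nonneg)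
  qed
qed

lemma h_bound:
  assumes x: "x \<in> space M"
    and LT: "\<And>x (t::real) s. x \<in> space M \<Longrightarrow> 0 \<le> t \<Longrightarrow> 0 < s \<Longrightarrow> s < 1 \<Longrightarrow> \<phi> x (s * t) \<le> C' * s * \<phi> x t"
    and C1: "C' \<ge> 1" and t: "t > 0" "2 * t < T" and w: "0 \<le> w" "w \<le> \<phi> x (2 * t)"
    and k: "\<phi> x T \<le> k" and c: "c \<ge> 0"
  shows "c * w / t \<le> 2 * c * C' * k / T"
proof -
  define s where "s = 2 * t / T"
  have T: "T > 0" using t by simp
  have s: "0 < s" "s < 1" using t T unfolding s_def by auto
  have "\<phi> x (2 * t) = \<phi> x (s * T)" unfolding s_def using T by simp
  also have "\<dots> \<le> C' * s * \<phi> x T" using LT[OF x _ s] T by simp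
  also have "\<dots> \<le> C' * s * k" using k C1 s by (intro mult_left_mono) auto
  finally have "w \<le> C' * (2 * t / T) * k" using w s_def by simp
  then have "w / t \<le> 2 * C' * k / T" using t T by (simp add: divide_le_eq field_simps)
  then have "c * (w / t) \<le> c * (2 * C' * k / T)" using c by (rule mult_left_mono)
  then show ?thesis by (simp add: ac_simps)
qed

lemma real_limit_arg:
  fixes l a0 K0 C :: real
  assumes "\<And>e. e > 0 \<Longrightarrow> l \<le> C * (a0 + e) * (K0 + e)"
  shows "l \<le> C * a0 * K0"
proof (rule tendsto_lowerbound)
  show "((\<lambda>e. C * (a0 + e) * (K0 + e)) \<longlongrightarrow> C * a0 * K0) (at_right 0)"
    by (auto intro!: tendsto_eq_intros)
  show "\<forall>\<^sub>F e in at_right 0. l \<le> C * (a0 + e) * (K0 + e)"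
    by (rule eventually_mono[OF eventually_at_right_less]) (use assms in auto)
qed simp




lemma core:
  fixes M :: "'a measure" and F :: "nat \<Rightarrow> 'a measure" and \<phi> :: "'a \<Rightarrow> real \<Rightarrow> real"
    and g :: "nat \<Rightarrow> 'a \<Rightarrow> real" and f :: "'a \<Rightarrow> ennreal"
  assumes P: "prob_space M" and sub: "\<And>n. subalgebra M (F n)" and mo: "musielak_orlicz M \<phi>"
    and C1: "C' \<ge> 1"
    and LT: "\<And>x (t::real) s. x \<in> space M \<Longrightarrow> 0 \<le> t \<Longrightarrow> 0 < s \<Longrightarrow> s < 1 \<Longrightarrow> \<phi> x (s * t) \<le> C' * s * \<phi> x t"
    and K0: "K0 > 0"
    and hyp: "\<forall>f. f \<in> borel_measurable M \<and> integrable M f \<longrightarrow>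
           lux_norm M (compl_fun \<phi>) (doob_max M F f) \<le> ennreal K0 * lux_norm M (compl_fun \<phi>) (\<lambda>x. ennreal \<bar>f x\<bar>)"
    and gm[measurable]: "\<And>k. g k \<in> borel_measurable M"
    and fm[measurable]: "f \<in> borel_measurable M"
    and R: "R \<ge> 0" and fR: "\<And>x. x \<in> space M \<Longrightarrow> f x \<le> ennreal R"
    and fF: "\<And>x. x \<in> space M \<Longrightarrow> f x \<le> (\<Sum>k. nn_cond_exp M (F k) (\<lambda>y. ennreal (g k y)) x)"
    and lam0: "lam > 0" and big: "modu M (\<lambda>x t. ennreal (\<phi> x t)) f lam > 1"
  shows "ennreal lam \<le> ennreal (8 * C' * K0) * lux_norm M (\<lambda>x t. ennreal (\<phi> x t)) (\<lambda>x. \<Sum>k. ennreal (g k x))"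
proof -
  interpret prob_space M by (rule P)
  define m where "m = sw \<phi> f lam"
  have [measurable]: "m \<in> borel_measurable M" unfolding m_def by (rule sw_meas[OF mo fm])
  define t where "t x = enn2real (f x) / lam" for x
  have ffin: "f x \<noteq> \<infinity>" if "x \<in> space M" for x using fR[OF that] by (auto simp: top_unique)
  have tR: "0 \<le> t x \<and> t x \<le> R / lam" if x: "x \<in> space M" for x
  proof -
    have "enn2real (f x) \<le> enn2real (ennreal R)" using fR[OF x] by (intro enn2real_mono) auto
    then show ?thesis unfolding t_def using lam0 R by (simp add: divide_right_mono)
  qed
  have fx: "f x = ennreal (lam * t x)" if "x \<in> space M" for x
    unfolding t_def using lam0 ffin[OF that] by (simp add: ennreal_enn2real_if)
  have mlo: "ennreal (\<phi> x (t x)) \<le> m x" if x: "x \<in> space M" for x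
    using sw_lo[OF mo x lam0, of f] ffin[OF x] unfolding m_def t_def by simp
  have mhi: "m x \<le> ennreal (\<phi> x (2 * t x))" if x: "x \<in> space M" for x
  proof -
    have "m x \<le> ennreal (\<phi> x (enn2real (f x) / (lam / 2)))"
      using sw_hi[OF mo x, of "lam/2" lam f] ffin[OF x] lam0 unfolding m_def by simp
    also have "enn2real (f x) / (lam / 2) = 2 * t x" unfolding t_def by simp
    finally show ?thesis .
  qed
  have int_m: "1 < (\<integral>\<^sup>+ x. m x \<partial>M)"
  proof -
    have "modu M (\<lambda>x t. ennreal (\<phi> x t)) f lam \<le> (\<integral>\<^sup>+ x. m x \<partial>M)"
      unfolding modu_def by (rule nn_integral_mono) (use mlo ffin in \<open>auto simp: t_def\<close>)
    with big show ?thesis by simp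
  qed
  define T where "T = 2 * R / lam + 1"
  have "0 \<le> 2 * R / lam" using R lam0 by simp
  then have T0: "T > 0" unfolding T_def by simp
  have tT: "2 * t x < T" if "x \<in> space M" for x
  proof -
    have "2 * R / lam = 2 * (R / lam)" by simp
    then show ?thesis using tR[OF that] unfolding T_def by linarith
  qed
  have [measurable]: "(\<lambda>x. \<phi> x T) \<in> borel_measurable M" using mo_meas[OF mo] T0 by simp
  define mk where "mk k x = (if m x \<le> of_nat k \<and> \<phi> x T \<le> real k then m x else 0)" for k x
  have [measurable]: "\<And>k. mk k \<in> borel_measurable M" unfolding mk_def by measurable
  have inc: "incseq mk"
  proof (rule incseq_SucI)
    fix k show "mk k \<le> mk (Suc k)"
    proof (unfold le_fun_def, intro allI)
      fix x
      have "(of_nat k :: ennreal) \<le> of_nat (Suc k)" by (rule of_nat_mono) simp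
      then show "mk k x \<le> mk (Suc k) x" unfolding mk_def
        by (cases "m x \<le> of_nat k \<and> \<phi> x T \<le> real k") (auto intro: order_trans)
    qed
  qed
  have sup: "(SUP k. mk k x) = m x" if x: "x \<in> space M" for x
  proof (rule antisym)
    show "(SUP k. mk k x) \<le> m x" by (rule SUP_least) (simp add: mk_def)
    obtain k :: nat where k: "max (\<phi> x (2 * t x)) (\<phi> x T) \<le> real k" using real_arch_simple by blast
    have "m x \<le> of_nat k"
      using order_trans[OF mhi[OF x] ennreal_leI[of _ "real k"]] k by (simp add: ennreal_of_nat_eq_real_of_nat)
    then have "mk k x = m x" unfolding mk_def using k by simp
    then show "m x \<le> (SUP k. mk k x)" by (metis SUP_upper UNIV_I)
  qed
  have "(\<integral>\<^sup>+ x. m x \<partial>M) = (\<integral>\<^sup>+ x. (SUP k. mk k x) \<partial>M)"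
    by (rule nn_integral_cong) (simp add: sup)
  also have "\<dots> = (SUP k. \<integral>\<^sup>+ x. mk k x \<partial>M)"
    by (rule nn_integral_monotone_convergence_SUP[OF inc]) simp
  finally obtain k where kbig: "1 < (\<integral>\<^sup>+ x. mk k x \<partial>M)" using int_m by (auto simp: less_SUP_iff)
  define M0 where "M0 = (\<integral>\<^sup>+ x. mk k x \<partial>M)"
  have "M0 \<le> (\<integral>\<^sup>+ x. of_nat k \<partial>M)" unfolding M0_def
    by (rule nn_integral_mono) (simp add: mk_def)
  also have "\<dots> = of_nat k" by (simp add: emeasure_space_1)
  finally have M0k: "M0 \<le> of_nat k" .
  then have M0fin: "M0 \<noteq> \<infinity>" by (auto simp: top_unique)
  define M0r where "M0r = enn2real M0"
  have M0e: "M0 = ennreal M0r" unfolding M0r_def using M0fin by (simp add: ennreal_enn2real_if)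
  have "ennreal 1 < ennreal M0r" using kbig M0e unfolding M0_def by simp
  then have M1: "M0r > 1" by (subst (asm) ennreal_less_iff) auto
  define w where "w x = enn2real (mk k x)" for x
  have mkw: "mk k x = ennreal (w x)" if x: "x \<in> space M" for x
  proof -
    have "mk k x \<le> ennreal (\<phi> x (2 * t x))" using mhi[OF x] unfolding mk_def by auto
    then have "mk k x \<noteq> \<infinity>" by (auto simp: top_unique)
    then show ?thesis unfolding w_def by (simp add: ennreal_enn2real_if)
  qed
  have w0: "0 \<le> w x" for x unfolding w_def by simp
  have wle: "w x \<le> \<phi> x (2 * t x)" if x: "x \<in> space M" for x
  proof -
    have "ennreal (w x) \<le> ennreal (\<phi> x (2 * t x))" using mhi[OF x] mkw[OF x] unfolding mk_def by (auto split: if_splits)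
    moreover have "0 \<le> \<phi> x (2 * t x)" using mo_nonneg[OF mo x] tR[OF x] by simp
    ultimately show ?thesis by (simp add: ennreal_le_iff)
  qed
  have wt0: "w x = 0" if x: "x \<in> space M" and "t x = 0" for x
    using wle[OF x] w0[of x] mo_zero[OF mo x] \<open>t x = 0\<close> by simp
  have wk: "\<phi> x T \<le> real k" if x: "x \<in> space M" and "w x \<noteq> 0" for x
    using that unfolding w_def mk_def by (auto split: if_splits)
  define c where "c = 1 / (2 * C' * M0r)"
  have c0: "c > 0" unfolding c_def using C1 M1 by simp
  define h where "h x = c * w x / t x" for x
  have [measurable]: "h \<in> borel_measurable M" unfolding h_def w_def t_def by measurable
  have hb: "0 \<le> h x \<and> h x \<le> 2 * c * C' * real k / T" if x: "x \<in> space M" for x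
  proof (cases "t x = 0 \<or> w x = 0")
    case True
    then have "h x = 0" unfolding h_def by auto
    moreover have "0 \<le> 2 * c * C' * real k / T" using c0 C1 T0 by simp
    ultimately show ?thesis by simp
  next
    case False
    then have tp: "t x > 0" using tR[OF x] by simp
    have wne: "w x \<noteq> 0" using False by simp
    have "h x \<le> 2 * c * C' * real k / T" unfolding h_def
      by (rule h_bound[where \<phi>=\<phi> and C'=C' and M=M, OF x LT C1 tp tT[OF x] w0[of x] wle[OF x] wk[OF x wne]]) (use c0 in auto)
    moreover have "0 \<le> h x" unfolding h_def using c0 w0[of x] tp by simp
    ultimately show ?thesis by simp
  qed
  have hint: "integrable M h"
    by (rule integrable_const_bound[where B="2 * c * C' * real k / T"]) (auto intro!: AE_I2 dest: hb)
  have hstar: "compl_fun \<phi> x (h x) \<le> ennreal (2 * c) * mk k x" if x: "x \<in> space M" for x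
  proof (cases "t x = 0 \<or> w x = 0")
    case True
    then have "h x = 0" unfolding h_def by auto
    moreover have "compl_fun \<phi> x 0 \<le> ennreal 0"
      by (rule compl_le) (use mo_nonneg[OF mo x] in auto)
    ultimately show ?thesis by simp
  next
    case False
    then have tp: "t x > 0" using tR[OF x] by simp
    have "compl_fun \<phi> x (h x) \<le> ennreal (2 * c * w x)" unfolding h_def
      by (rule star_bound[where \<phi>=\<phi> and C'=C' and M=M, OF mo x LT C1 less_imp_le[OF M1] c_def tp w0[of x] wle[OF x]])
    also have "\<dots> = ennreal (2 * c) * mk k x" using mkw[OF x] c0 w0[of x] by (simp add: ennreal_mult)
    finally show ?thesis .
  qed
  have luxh: "lux_norm M (compl_fun \<phi>) (\<lambda>x. ennreal \<bar>h x\<bar>) \<le> 1"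
  proof -
    have "modu M (compl_fun \<phi>) (\<lambda>x. ennreal \<bar>h x\<bar>) 1 \<le> (\<integral>\<^sup>+ x. ennreal (2 * c) * mk k x \<partial>M)"
      unfolding modu_def by (rule nn_integral_mono) (use hstar hb in auto)
    also have "\<dots> = ennreal (2 * c) * M0" unfolding M0_def by (rule nn_integral_cmult) simp
    also have "\<dots> = ennreal (2 * c * M0r)" using M0e c0 M1 by (simp add: ennreal_mult)
    also have "2 * c * M0r = 1 / C'" unfolding c_def using M1 C1 by simp
    also have "ennreal (1 / C') \<le> 1" using C1 by simp
    finally show ?thesis using lux_le[of 1] by simp
  qed
  have luxD: "lux_norm M (compl_fun \<phi>) (doob_max M F h) \<le> ennreal K0"
  proof -
    have "lux_norm M (compl_fun \<phi>) (doob_max M F h) \<le> ennreal K0 * lux_norm M (compl_fun \<phi>) (\<lambda>x. ennreal \<bar>h x\<bar>)"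
      using hyp hint by simp
    also have "\<dots> \<le> ennreal K0 * 1" by (intro mult_left_mono luxh) simp
    finally show ?thesis by simp
  qed
  have fh: "(\<integral>\<^sup>+ x. f x * ennreal (h x) \<partial>M) = ennreal (lam / (2 * C'))"
  proof -
    have "(\<integral>\<^sup>+ x. f x * ennreal (h x) \<partial>M) = (\<integral>\<^sup>+ x. ennreal (lam * c) * mk k x \<partial>M)"
    proof (rule nn_integral_cong)
      fix x assume x: "x \<in> space M"
      show "f x * ennreal (h x) = ennreal (lam * c) * mk k x"
      proof (cases "t x = 0")
        case True
        then show ?thesis using fx[OF x] mkw[OF x] wt0[OF x] by simp
      next
        case False
        have "lam * t x * h x = lam * c * w x" unfolding h_def using False by simp
        then show ?thesis using fx[OF x] mkw[OF x] tR[OF x] lam0 c0 w0[of x] hb[OF x]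
          by (simp add: ennreal_mult[symmetric] del: ennreal_mult ennreal_mult')
      qed
    qed
    also have "\<dots> = ennreal (lam * c) * M0" unfolding M0_def by (rule nn_integral_cmult) simp
    also have "\<dots> = ennreal (lam * c * M0r)" using M0e c0 M1 lam0 by (simp add: ennreal_mult)
    also have "lam * c * M0r = lam / (2 * C')" unfolding c_def using M1 C1 by simp
    finally show ?thesis .
  qed
  define G where "G x = (\<Sum>k. ennreal (g k x))" for x
  have [measurable]: "G \<in> borel_measurable M" unfolding G_def by measurable
  have key: "ennreal (lam / (2 * C')) \<le> (\<integral>\<^sup>+ x. G x * doob_max M F h x \<partial>M)"
  proof -
    have "ennreal (lam / (2 * C')) \<le> (\<integral>\<^sup>+ x. (\<Sum>k. nn_cond_exp M (F k) (\<lambda>y. ennreal (g k y)) x) * ennreal (h x) \<partial>M)"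
      unfolding fh[symmetric] by (rule nn_integral_mono) (use fF in \<open>auto intro: mult_right_mono\<close>)
    also have "\<dots> \<le> (\<integral>\<^sup>+ x. G x * doob_max M F h x \<partial>M)"
      unfolding G_def by (rule mart[OF P sub, where b = "2 * c * C' * real k / T"]) (auto dest: hb)
    finally show ?thesis .
  qed
  show ?thesis
  proof (cases "lux_norm M (\<lambda>x t. ennreal (\<phi> x t)) G" rule: ennreal_cases)
    case top
    have "ennreal (8 * C' * K0) > 0" using C1 K0 by simp
    then show ?thesis using top C1 K0 unfolding G_def by (simp add: ennreal_mult_top)
  next
    case (real a0)
    have "lam \<le> (8 * C') * (a0 + e) * (K0 + e)" if e: "e > 0" for e
    proof -
      have monoP: "\<And>x s t. x \<in> space M \<Longrightarrow> 0 \<le> s \<Longrightarrow> s \<le> t \<Longrightarrow> ennreal (\<phi> x s) \<le> ennreal (\<phi> x t)"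
        by (intro ennreal_leI mo_mono[OF mo]) auto
      have "lux_norm M (\<lambda>x t. ennreal (\<phi> x t)) G < ennreal (a0 + e)"
        using real e by (simp add: ennreal_lessI)
      then have mG: "modu M (\<lambda>x t. ennreal (\<phi> x t)) G (a0 + e) \<le> 1"
        using lux_lt[of M "\<lambda>x t. ennreal (\<phi> x t)" G "a0 + e"] monoP by blast
      have cm: "\<And>x s t. x \<in> space M \<Longrightarrow> 0 \<le> s \<Longrightarrow> s \<le> t \<Longrightarrow> compl_fun \<phi> x s \<le> compl_fun \<phi> x t"
        by (rule compl_mono)
      have "lux_norm M (compl_fun \<phi>) (doob_max M F h) < ennreal (K0 + e)"
        proof -
        have "ennreal K0 < ennreal (K0 + e)" using e K0 by (intro ennreal_lessI) auto
        then show ?thesis using luxD by (rule le_less_trans[rotated])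
      qed
      then have mQ: "modu M (compl_fun \<phi>) (doob_max M F h) (K0 + e) \<le> 1"
        using lux_lt[of M "compl_fun \<phi>" "doob_max M F h" "K0 + e", OF cm] by simp
      have "(\<integral>\<^sup>+ x. G x * doob_max M F h x \<partial>M) \<le> ennreal (4 * (a0 + e) * (K0 + e))"
        by (rule holder[OF mo _ _ _ _ mG mQ]) (use real e K0 in auto)
      with key have "ennreal (lam / (2 * C')) \<le> ennreal (4 * (a0 + e) * (K0 + e))" by simp
      then have "lam / (2 * C') \<le> 4 * (a0 + e) * (K0 + e)"
        using real e K0 by (simp add: ennreal_le_iff)
      then have "lam \<le> 4 * (a0 + e) * (K0 + e) * (2 * C')" using C1 by (simp add: divide_le_eq)
      then show ?thesis by (simp add: algebra_simps)
    qed
    then have "lam \<le> (8 * C') * a0 * K0" by (rule real_limit_arg)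
    then have "ennreal lam \<le> ennreal (8 * C' * K0 * a0)" by (simp add: ennreal_leI mult_ac)
    also have "\<dots> = ennreal (8 * C' * K0) * ennreal a0" using real C1 K0 by (simp add: ennreal_mult)
    finally show ?thesis using real unfolding G_def by simp
  qed
qed



theorem theorem3p5:
  fixes M :: "'a measure" and F :: "nat \<Rightarrow> 'a measure"
    and \<phi> :: "'a \<Rightarrow> real \<Rightarrow> real" and p :: real
  assumes "prob_space M"
    and "\<And>n. subalgebra M (F n)"
    and "\<And>m n. m \<le> n \<Longrightarrow> sets (F m) \<subseteq> sets (F n)"
    and "musielak_orlicz M \<phi>"
    and "p \<ge> 1" and "uniformly_lower_type M \<phi> p"
    and "\<exists>C>0. \<forall>f. f \<in> borel_measurable M \<and> integrable M f \<longrightarrow>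
           lux_norm M (compl_fun \<phi>) (doob_max M F f)
             \<le> ennreal C * lux_norm M (compl_fun \<phi>) (\<lambda>x. ennreal \<bar>f x\<bar>)"
  shows "\<exists>C>0. \<forall>g :: nat \<Rightarrow> 'a \<Rightarrow> real.
           (\<forall>k. g k \<in> borel_measurable M \<and> (\<forall>x\<in>space M. g k x \<ge> 0)) \<longrightarrow>
           lux_norm M (\<lambda>x t. ennreal (\<phi> x t)) (\<lambda>x. \<Sum>k. nn_cond_exp M (F k) (\<lambda>y. ennreal (g k y)) x)
             \<le> ennreal C * lux_norm M (\<lambda>x t. ennreal (\<phi> x t)) (\<lambda>x. \<Sum>k. ennreal (g k x))"
proof -
  note P = assms(1) and sub = assms(2) and mo = assms(4)
  obtain C' where C1: "C' \<ge> 1"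
    and LT: "\<And>x (t::real) s. x \<in> space M \<Longrightarrow> 0 \<le> t \<Longrightarrow> 0 < s \<Longrightarrow> s < 1 \<Longrightarrow> \<phi> x (s * t) \<le> C' * s * \<phi> x t"
    using lower_type_C[OF assms(6,5,4)] by metis
  obtain K0 where K0: "K0 > 0" and hyp: "\<forall>f. f \<in> borel_measurable M \<and> integrable M f \<longrightarrow>
           lux_norm M (compl_fun \<phi>) (doob_max M F f)
             \<le> ennreal K0 * lux_norm M (compl_fun \<phi>) (\<lambda>x. ennreal \<bar>f x\<bar>)"
    using assms(7) by blast
  show ?thesis
  proof (intro exI[of _ "8 * C' * K0"] conjI allI impI)
    show "0 < 8 * C' * K0" using C1 K0 by simp
    fix g :: "nat \<Rightarrow> 'a \<Rightarrow> real"
    assume gA: "\<forall>k. g k \<in> borel_measurable M \<and> (\<forall>x\<in>space M. 0 \<le> g k x)"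
    then have gm[measurable]: "\<And>k. g k \<in> borel_measurable M" by simp
    define Fs where "Fs x = (\<Sum>k. nn_cond_exp M (F k) (\<lambda>y. ennreal (g k y)) x)" for x
    have [measurable]: "Fs \<in> borel_measurable M" unfolding Fs_def by measurable
    define A where "A = lux_norm M (\<lambda>x t. ennreal (\<phi> x t)) (\<lambda>x. \<Sum>k. ennreal (g k x))"
    define B where "B = lux_norm M (\<lambda>x t. ennreal (\<phi> x t)) Fs"
    show "lux_norm M (\<lambda>x t. ennreal (\<phi> x t)) (\<lambda>x. \<Sum>k. nn_cond_exp M (F k) (\<lambda>y. ennreal (g k y)) x)
             \<le> ennreal (8 * C' * K0) * lux_norm M (\<lambda>x t. ennreal (\<phi> x t)) (\<lambda>x. \<Sum>k. ennreal (g k x))"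
      unfolding Fs_def[symmetric] A_def[symmetric] B_def[symmetric]
    proof (rule ccontr)
      assume "\<not> B \<le> ennreal (8 * C' * K0) * A"
      then have lt: "ennreal (8 * C' * K0) * A < B" by simp
      then obtain r where r: "ennreal (8 * C' * K0) * A < r" "r < B" using dense by blast
      then obtain r2 where r2: "r < r2" "r2 < B" using dense by blast
      have "r \<noteq> \<infinity>" "r2 \<noteq> \<infinity>" using r r2 by (auto simp: top_unique)
      obtain lam where lam: "r = ennreal lam" "0 \<le> lam" using \<open>r \<noteq> \<infinity>\<close> by (cases r) auto
      obtain lam1 where lam1: "r2 = ennreal lam1" "0 \<le> lam1" using \<open>r2 \<noteq> \<infinity>\<close> by (cases r2) auto
      have "0 < r" using r(1) by (rule le_less_trans[OF zero_le])
      then have lam0: "lam > 0" using lam by simp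
      have ll: "lam < lam1" using r2(1) lam lam1 by (simp add: ennreal_less_iff)
      have bigF: "modu M (\<lambda>x t. ennreal (\<phi> x t)) Fs lam1 > 1"
        using lux_gt[of lam1 M _ Fs] r2 lam1 ll lam0 unfolding B_def by simp
      define fR where "fR R x = min (Fs x) (ennreal (real R))" for R :: nat and x
      have [measurable]: "\<And>R. fR R \<in> borel_measurable M" unfolding fR_def by measurable
      define n where "n R = sw \<phi> (fR R) lam1" for R
      have [measurable]: "\<And>R. n R \<in> borel_measurable M" unfolding n_def by (rule sw_meas[OF mo]) simp
      have inc: "incseq n"
      proof (rule incseq_SucI, unfold le_fun_def, intro allI)
        fix R x
        have a: "fR R x \<le> fR (Suc R) x" unfolding fR_def by (intro min.mono order.refl ennreal_leI) simp
        have b0: "fR (Suc R) x \<le> ennreal (real (Suc R))" unfolding fR_def by (rule min.cobounded2)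
        have b: "fR (Suc R) x \<noteq> \<infinity>"
        proof
          assume "fR (Suc R) x = \<infinity>"
          with b0 show False by (simp add: top_unique)
        qed
        have c: "lam1 > 0" using lam0 ll by simp
        show "n R x \<le> n (Suc R) x" unfolding n_def by (rule sw_mono[where f="fR R" and g="fR (Suc R)" and x=x, OF a b c])
      qed
      have supge: "(if Fs x = \<infinity> then \<infinity> else ennreal (\<phi> x (enn2real (Fs x) / lam1))) \<le> (SUP R. n R x)"
        if x: "x \<in> space M" for x
      proof (cases "Fs x = \<infinity>")
        case True
        have "(SUP R. n R x) = \<infinity>"
        proof -
          have "(SUP R\<in>UNIV. n R x) = top"
          proof (rule ennreal_SUP_eq_top)
            fix N :: nat
            have "filterlim (\<phi> x) at_top at_top" by (rule mo_lim[OF mo x])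
            then have "\<forall>\<^sub>F y in at_top. real N \<le> \<phi> x y" by (simp add: filterlim_at_top)
            then obtain Y where Y: "\<And>y. y \<ge> Y \<Longrightarrow> real N \<le> \<phi> x y" by (auto simp: eventually_at_top_linorder)
            obtain R :: nat where R: "max Y 0 * lam1 \<le> real R" using real_arch_simple by blast
            have l1: "lam1 > 0" using ll lam0 by simp
            have "Y * lam1 \<le> max Y 0 * lam1" using l1 by (intro mult_right_mono) auto
            then have "Y * lam1 \<le> real R" using R by linarith
            then have "Y \<le> real R / lam1" using l1 by (simp add: pos_le_divide_eq)
            then have "real N \<le> \<phi> x (real R / lam1)" by (rule Y)
            then have "of_nat N \<le> ennreal (\<phi> x (real R / lam1))" by (simp add: ennreal_of_nat_eq_real_of_nat ennreal_leI)
            also have "\<dots> \<le> n R x"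
              using sw_lo[OF mo x, of lam1 "fR R"] ll lam0 True unfolding n_def fR_def by simp
            finally show "\<exists>R\<in>UNIV. of_nat N \<le> n R x" by blast
          qed
          then show ?thesis by simp
        qed
        then show ?thesis by (subst \<open>(SUP R. n R x) = \<infinity>\<close>) simp
      next
        case False
        obtain R :: nat where R: "enn2real (Fs x) \<le> real R" using real_arch_simple by blast
        have "Fs x = ennreal (enn2real (Fs x))" using False by (simp add: ennreal_enn2real_if)
        also have "\<dots> \<le> ennreal (real R)" by (rule ennreal_leI[OF R])
        finally have "Fs x \<le> ennreal (real R)" .
        then have "fR R x = Fs x" unfolding fR_def by simp
        then have "(if Fs x = \<infinity> then \<infinity> else ennreal (\<phi> x (enn2real (Fs x) / lam1))) \<le> n R x"
          using sw_lo[OF mo x, of lam1 "fR R"] ll lam0 False unfolding n_def by simp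
        also have "\<dots> \<le> (SUP R. n R x)" by (rule SUP_upper) simp
        finally show ?thesis .
      qed
      have "1 < (\<integral>\<^sup>+ x. (SUP R. n R x) \<partial>M)"
      proof -
        have "modu M (\<lambda>x t. ennreal (\<phi> x t)) Fs lam1 \<le> (\<integral>\<^sup>+ x. (SUP R. n R x) \<partial>M)"
          unfolding modu_def by (rule nn_integral_mono) (rule supge)
        with bigF show ?thesis by simp
      qed
      also have "(\<integral>\<^sup>+ x. (SUP R. n R x) \<partial>M) = (SUP R. \<integral>\<^sup>+ x. n R x \<partial>M)"
        by (rule nn_integral_monotone_convergence_SUP[OF inc]) simp
      finally obtain R where R: "1 < (\<integral>\<^sup>+ x. n R x \<partial>M)" by (auto simp: less_SUP_iff)
      have "(\<integral>\<^sup>+ x. n R x \<partial>M) \<le> modu M (\<lambda>x t. ennreal (\<phi> x t)) (fR R) lam"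
        unfolding modu_def n_def by (rule nn_integral_mono) (rule sw_hi[OF mo _ lam0 ll])
      with R have bigR: "1 < modu M (\<lambda>x t. ennreal (\<phi> x t)) (fR R) lam" by simp
      have fRle: "\<And>x. x \<in> space M \<Longrightarrow> fR R x \<le> ennreal (real R)" by (simp add: fR_def)
      have fRF: "\<And>x. x \<in> space M \<Longrightarrow> fR R x \<le> (\<Sum>k. nn_cond_exp M (F k) (\<lambda>y. ennreal (g k y)) x)"
        unfolding fR_def Fs_def by simp
      have fRm: "fR R \<in> borel_measurable M" by simp
      have R0: "0 \<le> real R" by simp
      have "ennreal lam \<le> ennreal (8 * C' * K0) * A"
        unfolding A_def by (rule core[OF P sub mo C1 LT K0 hyp gm fRm R0 fRle fRF lam0 bigR])
      then show False using r lam by simp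
    qed
  qed
qed


end
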